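(* For every integer $n\ge 1$, $$\Phi^{(4)}[aq^n; b; c, c'; x, y] = \Phi^{(4)}[a; b; c, c'; x, y] + \frac{ax(1-b)}{1-c} \sum_{k=1}^n q^{k-1} \Phi^{(4)}[aq^k; bq; cq, c'; x, y] + \frac{ay(1-b)}{1-c'} \sum_{k=1}^n q^{k-1} \Phi^{(4)}[aq^k; bq; c, c'q; xq, y]$$ and $$\Phi^{(4)}[aq^{-n}; b; c, c'; x, y] = \Phi^{(4)}[a; b; c, c'; x, y] - \frac{ax(1-b)}{1-c} \sum_{k=1}^n q^{-k} \Phi^{(4)}[aq^{1-k}; bq; cq, c'; x, y] - \frac{ay(1-b)}{1-c'} \sum_{k=1}^n q^{-k} \Phi^{(4)}[aq^{1-k}; bq; c, c'q; xq, y].$$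
   Context: Let $q$ be a complex number with $0<|q|<1$. For complex $z$ and integer $m\ge 0$, $(z;q)_m=\prod_{j=0}^{m-1}(1-zq^j)$, with $(z;q)_0=1$. The $q$-Appell function $\Phi^{(4)}$ is $$\Phi^{(4)}[a; b; c, c'; x, y] = \sum_{m, n \geq 0} \frac{(a; q)_{m+n} (b; q)_{m+n}}{(q; q)_m (q; q)_n (c; q)_m (c'; q)_n} x^m y^n.$$ Identities are understood as identities of power series in $x,y$ (formal, or convergent for small $|x|,|y|$), with complex parameters chosen so that no denominator occurring vanishes. *)

theory Defs
  imports Complex_Main
begin

definition qpoch :: "complex \<Rightarrow> complex \<Rightarrow> nat \<Rightarrow> complex" where
  "qpoch z q m = (\<Prod>j<m. 1 - z * q ^ j)"

text \<open>A formal power series in two variables x, y is represented by its coefficient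
  function: F i j is the coefficient of x^i y^j.
  Phi4 q a b c c' sx sy is the formal series Phi^(4)[a; b; c, c'; sx*x, sy*y]
  (sx, sy are scalar rescalings of the variables, used for the argument x q).\<close>
definition Phi4 :: "complex \<Rightarrow> complex \<Rightarrow> complex \<Rightarrow> complex \<Rightarrow> complex \<Rightarrow> complex \<Rightarrow> complex
    \<Rightarrow> nat \<Rightarrow> nat \<Rightarrow> complex" where
  "Phi4 q a b c c' sx sy i j =
     qpoch a q (i + j) * qpoch b q (i + j)
       / (qpoch q q i * qpoch q q j * qpoch c q i * qpoch c' q j) * sx ^ i * sy ^ j"

definition xmul :: "(nat \<Rightarrow> nat \<Rightarrow> complex) \<Rightarrow> nat \<Rightarrow> nat \<Rightarrow> complex" where
  "xmul F i j = (if i = 0 then 0 else F (i - 1) j)"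

definition ymul :: "(nat \<Rightarrow> nat \<Rightarrow> complex) \<Rightarrow> nat \<Rightarrow> nat \<Rightarrow> complex" where
  "ymul F i j = (if j = 0 then 0 else F i (j - 1))"

end

theory Submission
  imports Defs
begin

lemma qpoch_Suc: "qpoch z q (Suc m) = qpoch z q m * (1 - z * q ^ m)"
  by (simp add: qpoch_def)

lemma qpoch_Suc': "qpoch z q (Suc m) = (1 - z) * qpoch (z * q) q m"
  unfolding qpoch_def by (subst prod.lessThan_Suc_shift) (simp add: mult.assoc)

lemma qpoch_q_nz:
  assumes "norm (q::complex) < 1" shows "qpoch q q m \<noteq> 0"
proof -
  have "q ^ Suc j \<noteq> 1" for j
  proof
    assume "q ^ Suc j = 1"
    hence "norm q ^ Suc j = 1" by (metis norm_one norm_power)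
    moreover have "norm q ^ Suc j < 1" using assms power_Suc_less_one[of "norm q" j] by (cases "q = 0") auto
    ultimately show False by linarith
  qed
  thus ?thesis unfolding qpoch_def by (simp add: mult.commute)
qed

lemma absX:
  fixes A b u v P B Qm Qj Cm Cj :: complex
  assumes "u \<noteq> 0" "v \<noteq> 0" "Qm \<noteq> 0" "Qj \<noteq> 0" "Cm \<noteq> 0" "Cj \<noteq> 0"
  shows "A * b / u * (P * B / (Qm * Qj * Cm * Cj))
     = A * v * P * (b * B) / (Qm * v * Qj * (u * Cm) * Cj)"
  using assms by (simp add: field_simps)

lemma absY:
  fixes A b u v P B Qm Qj Cm Cj s :: complex
  assumes "u \<noteq> 0" "v \<noteq> 0" "Qm \<noteq> 0" "Qj \<noteq> 0" "Cm \<noteq> 0" "Cj \<noteq> 0"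
  shows "A * b / u * (P * B / (Qj * Qm * Cj * Cm) * s)
     = A * s * v * P * (b * B) / (Qj * (Qm * v) * Cj * (u * Cm))"
  using assms by (simp add: field_simps)

lemma step:
  fixes q A b c c' :: complex
  assumes q1: "norm q < 1"
    and hc: "\<And>m. qpoch c q m \<noteq> 0" and hc': "\<And>m. qpoch c' q m \<noteq> 0"
  shows "Phi4 q (A * q) b c c' 1 1 i j =
             Phi4 q A b c c' 1 1 i j
           + A * (1 - b) / (1 - c) * xmul (Phi4 q (A * q) (b * q) (c * q) c' 1 1) i j
           + A * (1 - b) / (1 - c') * ymul (Phi4 q (A * q) (b * q) c (c' * q) q 1) i j"
proof (cases "i + j = 0")
  case True
  thus ?thesis by (simp add: Phi4_def qpoch_def xmul_def ymul_def)
next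
  case False
  then obtain M where NM: "i + j = Suc M" by (metis not0_implies_Suc)
  have c1: "1 - c \<noteq> 0" using hc[of 1] by (simp add: qpoch_def)
  have c1': "1 - c' \<noteq> 0" using hc'[of 1] by (simp add: qpoch_def)
  have cq: "qpoch (c*q) q m \<noteq> 0" for m using hc[of "Suc m"] by (simp add: qpoch_Suc')
  have cq': "qpoch (c'*q) q m \<noteq> 0" for m using hc'[of "Suc m"] by (simp add: qpoch_Suc')
  have qq: "qpoch q q m \<noteq> 0" for m using qpoch_q_nz[OF q1] .
  define P where "P = qpoch (A*q) q M"
  define D where "D = qpoch q q i * qpoch q q j * qpoch c q i * qpoch c' q j"
  have D0: "D \<noteq> 0" using qq hc hc' by (simp add: D_def)
  have bN: "qpoch b q (i+j) = (1 - b) * qpoch (b*q) q M" by (simp add: NM qpoch_Suc')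
  have main: "Phi4 q (A * q) b c c' 1 1 i j - Phi4 q A b c c' 1 1 i j
      = A * (1 - q^(i+j)) * P * qpoch b q (i+j) / D"
  proof -
    have e1: "qpoch (A*q) q (i+j) = P * (1 - A * q^(i+j))"
      by (simp add: NM qpoch_Suc P_def mult.assoc)
    have e2: "qpoch A q (i+j) = (1 - A) * P" by (simp add: NM qpoch_Suc' P_def)
    show ?thesis unfolding Phi4_def D_def[symmetric] e1 e2 using D0
      by (simp add: field_simps)
  qed
  have X: "A * (1 - b) / (1 - c) * xmul (Phi4 q (A * q) (b * q) (c * q) c' 1 1) i j
      = A * (1 - q^i) * P * qpoch b q (i+j) / D"
  proof (cases i)
    case 0 thus ?thesis by (simp add: xmul_def)
  next
    case (Suc m)
    have "m + j = M" using NM Suc by simp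
    hence "xmul (Phi4 q (A * q) (b * q) (c * q) c' 1 1) i j
        = P * qpoch (b*q) q M / (qpoch q q m * qpoch q q j * qpoch (c*q) q m * qpoch c' q j)"
      by (simp add: xmul_def Suc Phi4_def P_def)
    moreover have Dm: "D = qpoch q q m * (1 - q^i) * qpoch q q j * ((1 - c) * qpoch (c*q) q m) * qpoch c' q j"
    proof -
      have "qpoch q q i = qpoch q q m * (1 - q^i)" unfolding Suc qpoch_Suc by simp
      moreover have "qpoch c q i = (1-c)*qpoch (c*q) q m" unfolding Suc by (rule qpoch_Suc')
      ultimately show ?thesis unfolding D_def by simp
    qed
    ultimately have xm: "xmul (Phi4 q (A * q) (b * q) (c * q) c' 1 1) i j
        = P * qpoch (b*q) q M / (qpoch q q m * qpoch q q j * qpoch (c*q) q m * qpoch c' q j)" by simp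
    have qi: "1 - q^i \<noteq> 0" using D0 Dm by auto
    show ?thesis unfolding xm Dm bN by (rule absX[OF c1 qi qq qq cq hc'])
  qed
  have Y: "A * (1 - b) / (1 - c') * ymul (Phi4 q (A * q) (b * q) c (c' * q) q 1) i j
      = A * q^i * (1 - q^j) * P * qpoch b q (i+j) / D"
  proof (cases j)
    case 0 thus ?thesis by (simp add: ymul_def)
  next
    case (Suc m)
    have "i + m = M" using NM Suc by simp
    hence "ymul (Phi4 q (A * q) (b * q) c (c' * q) q 1) i j
        = P * qpoch (b*q) q M / (qpoch q q i * qpoch q q m * qpoch c q i * qpoch (c'*q) q m) * q^i"
      by (simp add: ymul_def Suc Phi4_def P_def)
    moreover have Dm: "D = qpoch q q i * (qpoch q q m * (1 - q^j)) * qpoch c q i * ((1 - c') * qpoch (c'*q) q m)"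
    proof -
      have "qpoch q q j = qpoch q q m * (1 - q^j)" unfolding Suc qpoch_Suc by simp
      moreover have "qpoch c' q j = (1-c')*qpoch (c'*q) q m" unfolding Suc by (rule qpoch_Suc')
      ultimately show ?thesis unfolding D_def by simp
    qed
    ultimately have ym: "ymul (Phi4 q (A * q) (b * q) c (c' * q) q 1) i j
        = P * qpoch (b*q) q M / (qpoch q q i * qpoch q q m * qpoch c q i * qpoch (c'*q) q m) * q^i" by simp
    have qj: "1 - q^j \<noteq> 0" using D0 Dm by auto
    show ?thesis unfolding ym Dm bN by (rule absY[OF c1' qj qq qq cq' hc])
  qed
  have "A * (1 - q^(i+j)) * P * qpoch b q (i+j) / D
      = A * (1 - q^i) * P * qpoch b q (i+j) / D + A * q^i * (1 - q^j) * P * qpoch b q (i+j) / D"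
    using D0 by (simp add: field_simps power_add)
  thus ?thesis using main X Y by (simp add: algebra_simps)
qed

theorem theorem14:
  fixes q a b c c' :: complex and n :: nat
  assumes "0 < norm q" and "norm q < 1"
    and "\<And>m. qpoch c q m \<noteq> 0" and "\<And>m. qpoch c' q m \<noteq> 0"
    and "n \<ge> 1"
  shows "(\<forall>i j. Phi4 q (a * q ^ n) b c c' 1 1 i j =
             Phi4 q a b c c' 1 1 i j
           + a * (1 - b) / (1 - c) *
               (\<Sum>k=1..n. q ^ (k - 1) * xmul (Phi4 q (a * q ^ k) (b * q) (c * q) c' 1 1) i j)
           + a * (1 - b) / (1 - c') *
               (\<Sum>k=1..n. q ^ (k - 1) * ymul (Phi4 q (a * q ^ k) (b * q) c (c' * q) q 1) i j))
       \<and> (\<forall>i j. Phi4 q (a * q powi (- int n)) b c c' 1 1 i j =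
             Phi4 q a b c c' 1 1 i j
           - a * (1 - b) / (1 - c) *
               (\<Sum>k=1..n. q powi (- int k) *
                  xmul (Phi4 q (a * q powi (1 - int k)) (b * q) (c * q) c' 1 1) i j)
           - a * (1 - b) / (1 - c') *
               (\<Sum>k=1..n. q powi (- int k) *
                  ymul (Phi4 q (a * q powi (1 - int k)) (b * q) c (c' * q) q 1) i j))"
proof (intro conjI allI)
  fix i j
  have q0: "q \<noteq> 0" using assms(1) by auto
  note st = step[OF assms(2) assms(3) assms(4)]
  show "Phi4 q (a * q ^ n) b c c' 1 1 i j =
             Phi4 q a b c c' 1 1 i j
           + a * (1 - b) / (1 - c) *
               (\<Sum>k=1..n. q ^ (k - 1) * xmul (Phi4 q (a * q ^ k) (b * q) (c * q) c' 1 1) i j)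
           + a * (1 - b) / (1 - c') *
               (\<Sum>k=1..n. q ^ (k - 1) * ymul (Phi4 q (a * q ^ k) (b * q) c (c' * q) q 1) i j)"
  proof (induction n)
    case 0 thus ?case by simp
  next
    case (Suc n)
    have eq: "a * q ^ n * q = a * q ^ Suc n" by (simp add: ac_simps)
    have "Phi4 q (a * q ^ Suc n) b c c' 1 1 i j = Phi4 q (a * q ^ n) b c c' 1 1 i j
           + (a * q ^ n) * (1 - b) / (1 - c) * xmul (Phi4 q (a * q ^ Suc n) (b * q) (c * q) c' 1 1) i j
           + (a * q ^ n) * (1 - b) / (1 - c') * ymul (Phi4 q (a * q ^ Suc n) (b * q) c (c' * q) q 1) i j"
      using st[of "a * q ^ n", unfolded eq] by simp
    thus ?case using Suc.IH
      by (simp add: sum.atLeast1_atMost_eq algebra_simps sum_distrib_left)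
  qed
  show "Phi4 q (a * q powi (- int n)) b c c' 1 1 i j =
             Phi4 q a b c c' 1 1 i j
           - a * (1 - b) / (1 - c) *
               (\<Sum>k=1..n. q powi (- int k) *
                  xmul (Phi4 q (a * q powi (1 - int k)) (b * q) (c * q) c' 1 1) i j)
           - a * (1 - b) / (1 - c') *
               (\<Sum>k=1..n. q powi (- int k) *
                  ymul (Phi4 q (a * q powi (1 - int k)) (b * q) c (c' * q) q 1) i j)"
  proof (induction n)
    case 0 thus ?case by simp
  next
    case (Suc n)
    define A where "A = a * q powi (- int (Suc n))"
    have "q powi (- int (Suc n)) * q = q powi (- int n)" using q0
      by (simp only: power_int_minus power_int_of_nat) (simp add: field_simps)
    hence Aq: "A * q = a * q powi (- int n)" by (simp add: A_def mult.assoc)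
    have e: "q powi (1 - int (Suc n)) = q powi (- int n)" by simp
    from st[of A] have "Phi4 q A b c c' 1 1 i j = Phi4 q (a * q powi (- int n)) b c c' 1 1 i j
           - A * (1 - b) / (1 - c) * xmul (Phi4 q (a * q powi (- int n)) (b * q) (c * q) c' 1 1) i j
           - A * (1 - b) / (1 - c') * ymul (Phi4 q (a * q powi (- int n)) (b * q) c (c' * q) q 1) i j"
      unfolding Aq by (simp add: algebra_simps)
    thus ?case using Suc.IH unfolding A_def e
      by (simp add: algebra_simps sum_distrib_left)
  qed
qed

end
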